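(* Let $q=p^m$ with $p$ prime, let $\gamma$ be such that $\mathbb{F}_q=\mathbb{F}_p[\gamma]$, and let $t=\lfloor\frac{m-1}{4}\rfloor$. Let $n,k$ be integers with $5\le k\le\frac{n-2}{2}$ and $n\le p^t$. Let $g_1(x),\dots,g_n(x)\in\mathbb{F}_p[x]$ be pairwise distinct monic polynomials of degree exactly $t$, and set $\alpha_i=g_i(\gamma)$ for $1\le i\le n$. Let $C_{k-1,k-2}$ be the linear code over $\mathbb{F}_q$ generated by the $k\times n$ matrix whose rows are $(\alpha_1^{e},\dots,\alpha_n^{e})$ for $e=0,1,\dots,k-3,k,k+1$. If $p\nmid \frac{1}{12}k^2(k^2-1)$, then $C_{k-1,k-2}$ is an $[n,k]$ non-GRS MDS code over $\mathbb{F}_q$.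
   Context: Convention: $0^0=1$. Note $\frac{1}{12}k^2(k^2-1)$ is an integer. A linear code is MDS if its parameters $[n,k,d]$ satisfy $d=n-k+1$. For pairwise distinct $a_1,\dots,a_n\in\mathbb{F}_q$ and $w\in(\mathbb{F}_q^* )^n$, the generalized Reed–Solomon code is $GRS(n,k,\{a_i\},w)=\{(w_1f(a_1),\dots,w_nf(a_n)) : f\in\mathbb{F}_q[x],\ \deg f\le k-1\}$. Two codes are (monomially) equivalent if one is obtained from the other by a permutation of coordinates and multiplication of coordinates by nonzero scalars. A non-GRS MDS code is an MDS code not equivalent to any GRS code. *)

theory Defs
  imports "HOL-Computational_Algebra.Polynomial" "HOL-Library.Function_Algebras" "HOL-Combinatorics.Permutations" "HOL-Library.Cardinality"
begin

text \<open>Words of length n over a field are functions nat => 'a that vanish outside {..<n}.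
A code of length n is a set of such words.\<close>

definition cscale :: "'a::field \<Rightarrow> (nat \<Rightarrow> 'a) \<Rightarrow> (nat \<Rightarrow> 'a)" where
  "cscale c x = (\<lambda>i. c * x i)"

definition code_dim :: "(nat \<Rightarrow> 'a::field) set \<Rightarrow> nat" where
  "code_dim C = vector_space.dim cscale C"

definition hdist :: "nat \<Rightarrow> (nat \<Rightarrow> 'a::zero) \<Rightarrow> (nat \<Rightarrow> 'a) \<Rightarrow> nat" where
  "hdist n x y = card {i. i < n \<and> x i \<noteq> y i}"

definition min_dist :: "nat \<Rightarrow> (nat \<Rightarrow> 'a::zero) set \<Rightarrow> nat" where
  "min_dist n C = Min {hdist n x y | x y. x \<in> C \<and> y \<in> C \<and> x \<noteq> y}"

definition gen_code :: "nat \<Rightarrow> nat \<Rightarrow> (nat \<Rightarrow> nat \<Rightarrow> 'a::field) \<Rightarrow> (nat \<Rightarrow> 'a) set" where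
  "gen_code n K row = {(\<lambda>i. if i < n then (\<Sum>j<K. c j * row j i) else 0) | c. True}"

definition is_linear_code :: "nat \<Rightarrow> (nat \<Rightarrow> 'a::field) set \<Rightarrow> bool" where
  "is_linear_code n C \<longleftrightarrow> (\<forall>x\<in>C. \<forall>i\<ge>n. x i = 0) \<and> 0 \<in> C \<and>
      (\<forall>x\<in>C. \<forall>y\<in>C. x + y \<in> C) \<and> (\<forall>c. \<forall>x\<in>C. cscale c x \<in> C)"

definition is_MDS :: "nat \<Rightarrow> nat \<Rightarrow> (nat \<Rightarrow> 'a::field) set \<Rightarrow> bool" where
  "is_MDS n k C \<longleftrightarrow> is_linear_code n C \<and> code_dim C = k \<and> min_dist n C = n - k + 1"

definition GRS :: "nat \<Rightarrow> nat \<Rightarrow> (nat \<Rightarrow> 'a::field) \<Rightarrow> (nat \<Rightarrow> 'a) \<Rightarrow> (nat \<Rightarrow> 'a) set" where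
  "GRS n k a w = {(\<lambda>i. if i < n then w i * poly f (a i) else 0) | f. f = 0 \<or> degree f < k}"

definition is_GRS_params :: "nat \<Rightarrow> (nat \<Rightarrow> 'a::field) \<Rightarrow> (nat \<Rightarrow> 'a) \<Rightarrow> bool" where
  "is_GRS_params n a w \<longleftrightarrow> inj_on a {..<n} \<and> (\<forall>i<n. w i \<noteq> 0)"

definition code_equiv :: "nat \<Rightarrow> (nat \<Rightarrow> 'a::field) set \<Rightarrow> (nat \<Rightarrow> 'a) set \<Rightarrow> bool" where
  "code_equiv n C D \<longleftrightarrow> (\<exists>\<sigma> c. \<sigma> permutes {..<n} \<and> (\<forall>i<n. c i \<noteq> 0) \<and>
      D = (\<lambda>x. \<lambda>i. if i < n then c i * x (\<sigma> i) else 0) ` C)"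

definition non_GRS :: "nat \<Rightarrow> (nat \<Rightarrow> 'a::field) set \<Rightarrow> bool" where
  "non_GRS n C \<longleftrightarrow> \<not> (\<exists>k' a w. is_GRS_params n a w \<and> code_equiv n C (GRS n k' a w))"

definition prime_subfield :: "'a::field set" where
  "prime_subfield = range of_nat"

definition Fp_poly :: "'a::field poly \<Rightarrow> bool" where
  "Fp_poly f \<longleftrightarrow> (\<forall>i. coeff f i \<in> prime_subfield)"

definition generates_over_prime_field :: "'a::field \<Rightarrow> bool" where
  "generates_over_prime_field \<gamma> \<longleftrightarrow> (\<forall>x. \<exists>f. Fp_poly f \<and> poly f \<gamma> = x)"

end

theory Submission
  imports Defs
begin

lemma of_int_mod_CHAR:
  assumes "CHAR('a::comm_ring_1) > 0"
  shows "(of_int z :: 'a) = of_int (z mod int CHAR('a))"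
proof -
  have "z = z mod int CHAR('a) + int CHAR('a) * (z div int CHAR('a))" by simp
  then have "(of_int z :: 'a) = of_int (z mod int CHAR('a)) + of_nat CHAR('a) * of_int (z div int CHAR('a))"
    by (metis of_int_add of_int_mult of_int_of_nat_eq)
  then show ?thesis by simp
qed

lemma Ints_subset_range:
  assumes "CHAR('a::comm_ring_1) = p" "p > 0"
  shows "(\<int> :: 'a set) \<subseteq> of_nat ` {..<p}"
proof
  fix x :: 'a assume "x \<in> \<int>"
  then obtain z where z: "x = of_int z" by (auto elim: Ints_cases)
  have "(of_int z :: 'a) = of_int (z mod int CHAR('a))" by (rule of_int_mod_CHAR) (use assms in auto)
  then have "x = of_int (z mod int p)" using assms z by simp
  also have "\<dots> = of_nat (nat (z mod int p))" using assms by simp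
  finally have "x = of_nat (nat (z mod int p))" .
  moreover have "nat (z mod int p) < p" using assms by (simp add: nat_less_iff)
  ultimately show "x \<in> of_nat ` {..<p}" by blast
qed

lemma psf_subset_Ints: "prime_subfield \<subseteq> (\<int> :: 'a::field set)"
  unfolding prime_subfield_def by (auto intro: Ints_of_nat)

lemma card_Ints_le:
  assumes "CHAR('a::comm_ring_1) = p" "p > 0"
  shows "card (\<int> :: 'a set) \<le> p"
proof -
  have "card (\<int> :: 'a set) \<le> card (of_nat ` {..<p} :: 'a set)"
    by (rule card_mono) (use Ints_subset_range[OF assms] in auto)
  also have "\<dots> \<le> p" using card_image_le[of "{..<p}" "of_nat :: nat \<Rightarrow> 'a"] by simp
  finally show ?thesis .
qed

lemma Ints_inverse:
  fixes x :: "'a::{finite,field}"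
  assumes "x \<in> \<int>" "x \<noteq> 0"
  shows "inverse x \<in> \<int>"
proof -
  have "(\<lambda>y. x * y) ` \<int> = \<int>"
    by (rule endo_inj_surj) (use assms in \<open>auto simp: inj_on_def\<close>)
  then obtain y where "y \<in> \<int>" "x * y = 1"
    by (metis Ints_1 imageE)
  then have "inverse x = y" using assms by (metis field_class.field_inverse mult.left_commute mult_1_right)
  with \<open>y \<in> \<int>\<close> show ?thesis by simp
qed

definition IntP :: "'a::comm_ring_1 poly \<Rightarrow> bool" where
  "IntP f \<longleftrightarrow> (\<forall>i. coeff f i \<in> \<int>)"

lemma IntP_0 [simp]: "IntP 0" by (simp add: IntP_def)
lemma IntP_1 [simp]: "IntP 1" by (simp add: IntP_def coeff_1)
lemma IntP_add: "IntP f \<Longrightarrow> IntP g \<Longrightarrow> IntP (f + g)" by (simp add: IntP_def)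
lemma IntP_diff: "IntP f \<Longrightarrow> IntP g \<Longrightarrow> IntP (f - g)" by (simp add: IntP_def)
lemma IntP_minus: "IntP f \<Longrightarrow> IntP (- f)" by (simp add: IntP_def)
lemma IntP_mult: "IntP f \<Longrightarrow> IntP g \<Longrightarrow> IntP (f * g)"
  by (auto simp: IntP_def coeff_mult intro!: Ints_sum Ints_mult)
lemma IntP_smult: "c \<in> \<int> \<Longrightarrow> IntP g \<Longrightarrow> IntP (smult c g)"
  by (auto simp: IntP_def)
lemma IntP_monom: "c \<in> \<int> \<Longrightarrow> IntP (monom c n)"
  by (auto simp: IntP_def coeff_monom)
lemma IntP_power: "IntP f \<Longrightarrow> IntP (f ^ n)"
  by (induction n) (auto intro: IntP_mult)
lemma IntP_sum: "(\<And>x. x \<in> A \<Longrightarrow> IntP (f x)) \<Longrightarrow> IntP (sum f A)"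
  by (auto simp: IntP_def coeff_sum intro!: Ints_sum)

lemma Fp_IntP: "Fp_poly (f :: 'a::field poly) \<Longrightarrow> IntP f"
  using psf_subset_Ints by (auto simp: Fp_poly_def IntP_def)

lemma poly_sum_lt:
  fixes r :: "'a::comm_ring_1 poly"
  assumes "degree r < d"
  shows "poly r x = (\<Sum>i<d. coeff r i * x ^ i)"
proof -
  have "poly r x = (\<Sum>i\<le>degree r. coeff r i * x ^ i)" by (rule poly_altdef)
  also have "\<dots> = (\<Sum>i<d. coeff r i * x ^ i)"
    by (rule sum.mono_neutral_left) (use assms in \<open>auto simp: coeff_eq_0\<close>)
  finally show ?thesis .
qed

lemma degree_lt_of_coeff0:
  assumes "degree f \<le> N" "coeff f N = 0" "N > 0"
  shows "degree f < N"
  using assms by (metis le_neq_implies_less leading_coeff_0_iff degree_0)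

lemma lemma_G:
  fixes \<gamma> :: "'a::{finite,field}"
  assumes "prime p" "CHAR('a) = p" "CARD('a) = p^m" "generates_over_prime_field \<gamma>"
    and "IntP Q" "Q \<noteq> 0" "degree Q < m"
  shows "poly Q \<gamma> \<noteq> 0"
proof
  assume Q0: "poly Q \<gamma> = 0"
  have p1: "p > 1" using assms(1) prime_gt_1_nat by blast
  define d where "d = degree Q"
  have "d > 0"
  proof (rule ccontr)
    assume "\<not> d > 0"
    then have "degree Q = 0" by (simp add: d_def)
    then obtain c where "Q = [:c:]" by (rule degree_eq_zeroE)
    then show False using Q0 assms(6) by simp
  qed
  have lcI: "lead_coeff Q \<in> \<int>" using assms(5) by (simp add: IntP_def)
  have lc0: "lead_coeff Q \<noteq> 0" using assms(6) by simp
  define Q1 where "Q1 = smult (inverse (lead_coeff Q)) Q"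
  have Q1I: "IntP Q1" unfolding Q1_def by (rule IntP_smult[OF Ints_inverse[OF lcI lc0] assms(5)])
  have Q1d: "degree Q1 = d" unfolding Q1_def d_def using lc0 by simp
  have Q1c: "coeff Q1 d = 1" unfolding Q1_def d_def using lc0 by simp
  have Q1z: "poly Q1 \<gamma> = 0" unfolding Q1_def using Q0 by simp
  have red: "\<forall>f. degree f = N \<longrightarrow> IntP f \<longrightarrow> (\<exists>r. IntP r \<and> degree r < d \<and> poly r \<gamma> = poly f \<gamma>)" for N
  proof (induction N rule: less_induct)
    case (less N)
    show ?case
    proof (intro allI impI)
      fix f :: "'a poly" assume fN: "degree f = N" and fI: "IntP f"
      show "\<exists>r. IntP r \<and> degree r < d \<and> poly r \<gamma> = poly f \<gamma>"
      proof (cases "N < d")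
        case True then show ?thesis using fN fI by blast
      next
        case False
        define f' where "f' = f - monom (lead_coeff f) (N - d) * Q1"
        have dm: "degree (monom (lead_coeff f) (N - d) * Q1) \<le> N"
          using degree_mult_le[of "monom (lead_coeff f) (N - d)" Q1] degree_monom_le[of "lead_coeff f" "N - d"] Q1d False
          by linarith
        have "degree f' \<le> N" unfolding f'_def using dm fN by (meson degree_diff_le order_refl)
        moreover have "coeff f' N = 0"
          unfolding f'_def using False Q1c fN by (simp add: coeff_monom_mult)
        ultimately have "degree f' < N" using degree_lt_of_coeff0 \<open>d > 0\<close> False by auto
        moreover have "IntP f'" unfolding f'_def
          using fI Q1I by (intro IntP_diff IntP_mult IntP_monom) (auto simp: IntP_def)
        ultimately obtain r where "IntP r" "degree r < d" "poly r \<gamma> = poly f' \<gamma>"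
          using less by blast
        moreover have "poly f' \<gamma> = poly f \<gamma>" unfolding f'_def using Q1z by simp
        ultimately show ?thesis by auto
      qed
    qed
  qed
  have "(UNIV :: 'a set) \<subseteq> (\<lambda>c. \<Sum>i<d. c i * \<gamma> ^ i) ` (PiE {..<d} (\<lambda>_. \<int>))"
  proof
    fix x :: 'a
    obtain f where "Fp_poly f" "poly f \<gamma> = x" using assms(4) unfolding generates_over_prime_field_def by blast
    then obtain r where r: "IntP r" "degree r < d" "poly r \<gamma> = x" using red Fp_IntP by blast
    have "x = (\<Sum>i<d. restrict (coeff r) {..<d} i * \<gamma> ^ i)"
      using r poly_sum_lt[of r d \<gamma>] by simp
    moreover have "restrict (coeff r) {..<d} \<in> PiE {..<d} (\<lambda>_. \<int>)" using r(1) by (auto simp: IntP_def)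
    ultimately show "x \<in> (\<lambda>c. \<Sum>i<d. c i * \<gamma> ^ i) ` (PiE {..<d} (\<lambda>_. \<int>))" by blast
  qed
  then have "CARD('a) \<le> card ((\<lambda>c. \<Sum>i<d. c i * \<gamma> ^ i) ` (PiE {..<d} (\<lambda>_. \<int>)))"
    by (intro card_mono) auto
  also have "\<dots> \<le> card (PiE {..<d} (\<lambda>_. (\<int>::'a set)))" by (rule card_image_le) (auto intro!: finite_PiE)
  also have "\<dots> = card (\<int>::'a set) ^ d" by (simp add: card_PiE)
  also have "\<dots> \<le> p ^ d" using card_Ints_le[OF assms(2)] p1 by (simp add: power_mono)
  finally have "p ^ m \<le> p ^ d" using assms(3) by simp
  moreover have "d < m" using assms(7) d_def by simp
  ultimately show False using p1 by (meson leD power_strict_increasing)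
qed

lemma c2: "2 * (k choose 2) = k * (k - 1)"
  using binomial_absorption[of 1 k] by (simp add: numeral_2_eq_2)
lemma c3: "6 * (k choose 3) = k * (k - 1) * (k - 2)"
proof -
  have "3 * (k choose 3) = k * ((k - 1) choose 2)"
    using binomial_absorption[of 2 k] by (simp add: numeral_3_eq_3 numeral_2_eq_2)
  moreover have "2 * ((k - 1) choose 2) = (k - 1) * (k - 2)" using c2[of "k-1"] by (simp add: numeral_2_eq_2)
  ultimately have "2 * (3 * (k choose 3)) = k * ((k - 1) * (k - 2))" by (metis mult.left_commute)
  then show ?thesis by simp
qed
lemma poly_id: "3 * ((j+2)*(j+1))^2 = 2 * (j+2) * ((j+2)*(j+1)*j) + (j+2)^2 * (j^2 + 4*j + (3::nat))"
  by (simp add: power2_eq_square algebra_simps)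
lemma key_ident:
  assumes "k \<ge> 2"
  shows "(k choose 2)^2 = k * (k choose 3) + k^2 * (k^2 - 1) div 12"
proof -
  obtain j where j: "k = j + 2" using assms by (metis le_add_diff_inverse2)
  define A where "A = k choose 2"
  define B where "B = k choose 3"
  have a: "2 * A = (j+2)*(j+1)" using c2[of k] j A_def by simp
  have b: "6 * B = (j+2)*(j+1)*j" using c3[of k] j B_def by simp
  have e: "k^2 * (k^2 - 1) = (j+2)^2 * (j^2 + 4*j + 3)"
  proof -
    have "k^2 = (j^2 + 4*j + 3) + 1" using j by (simp add: power2_eq_square algebra_simps)
    then show ?thesis using j by simp
  qed
  have "12 * A^2 = 3 * (2 * A)^2" by (simp add: power2_eq_square algebra_simps)
  also have "\<dots> = 3 * ((j+2)*(j+1))^2" using a by simp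
  finally have 1: "12 * A^2 = 3 * ((j+2)*(j+1))^2" .
  have "12 * (k * B) = 2 * k * (6 * B)" by (simp add: power2_eq_square algebra_simps)
  also have "\<dots> = 2 * (j+2) * ((j+2)*(j+1)*j)" using b j by simp
  finally have 2: "12 * (k * B) = 2 * (j+2) * ((j+2)*(j+1)*j)" .
  have X: "12 * A^2 = 12 * (k * B) + k^2 * (k^2 - 1)" unfolding 1 2 e by (rule poly_id)
  then have le: "k * B \<le> A^2" by linarith
  have "k^2 * (k^2 - 1) = 12 * A^2 - 12 * (k * B)" using X by linarith
  also have "\<dots> = 12 * (A^2 - k * B)" by (simp add: diff_mult_distrib2)
  finally have "k^2 * (k^2 - 1) div 12 = A^2 - k * B" by simp
  then show ?thesis unfolding A_def[symmetric] B_def[symmetric] using le by simp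
qed

definition Rp :: "'a::comm_ring_1 poly list \<Rightarrow> 'a poly poly" where
  "Rp xs = prod_list (map (\<lambda>g. [:-g, 1:]) xs)"

lemma Rp_Nil [simp]: "Rp [] = 1" and Rp_Cons [simp]: "Rp (g # xs) = [:-g, 1:] * Rp xs"
  by (simp_all add: Rp_def)

lemma coeff_lin_mult:
  fixes S :: "'a::comm_ring_1 poly"
  shows "coeff ([:a, 1:] * S) j = a * coeff S j + (case j of 0 \<Rightarrow> 0 | Suc j' \<Rightarrow> coeff S j')"
  by (cases j) (simp_all add: mult_pCons_left)

lemma coeff_mult_top:
  assumes "degree A \<le> da" "degree B \<le> db"
  shows "coeff (A * B) (da + db) = coeff A da * coeff B db"
proof (cases "degree A = da \<and> degree B = db")
  case True then show ?thesis using coeff_mult_degree_sum[of A B] by simp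
next
  case False
  then have "degree A < da \<or> degree B < db" using assms by linarith
  then have "coeff A da = 0 \<or> coeff B db = 0" by (auto intro: coeff_eq_0)
  moreover have "degree (A * B) < da + db"
    using degree_mult_le[of A B] \<open>degree A < da \<or> degree B < db\<close> assms by linarith
  ultimately show ?thesis by (auto intro: coeff_eq_0)
qed

lemma Rp_deg: "degree (Rp xs) \<le> length xs"
proof (induction xs)
  case Nil then show ?case by simp
next
  case (Cons g xs)
  have "degree (Rp (g # xs)) \<le> degree [:-g, 1:] + degree (Rp xs)"
    by (simp only: Rp_Cons degree_mult_le)
  also have "\<dots> \<le> 1 + length xs" using Cons by simp
  finally show ?case by simp
qed

lemma Rp_coeffs:
  fixes xs :: "'a::comm_ring_1 poly list"
  assumes "\<forall>g\<in>set xs. degree g \<le> t \<and> coeff g t = 1"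
  shows "r \<le> length xs \<Longrightarrow> degree (coeff (Rp xs) (length xs - r)) \<le> r * t \<and>
           coeff (coeff (Rp xs) (length xs - r)) (r * t) = (-1)^r * of_nat (length xs choose r)"
  using assms
proof (induction xs arbitrary: r)
  case Nil then show ?case by simp
next
  case (Cons g xs)
  define L where "L = length xs"
  define S where "S = Rp xs"
  have g: "degree g \<le> t" "coeff g t = 1" using Cons.prems by auto
  have IH: "\<And>r. r \<le> L \<Longrightarrow> degree (coeff S (L - r)) \<le> r * t \<and>
           coeff (coeff S (L - r)) (r * t) = (-1)^r * of_nat (L choose r)"
    using Cons.IH Cons.prems unfolding L_def S_def by auto
  have cf: "coeff (Rp (g # xs)) j = -g * coeff S j + (case j of 0 \<Rightarrow> 0 | Suc j' \<Rightarrow> coeff S j')" for j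
    unfolding S_def Rp_Cons by (rule coeff_lin_mult)
  have dg: "degree (-g) \<le> t" "coeff (-g) t = -1" using g by auto
  show ?case
  proof (cases r)
    case 0
    have "coeff S (Suc L) = 0" unfolding S_def L_def using Rp_deg[of xs] by (intro coeff_eq_0) simp
    moreover have "coeff S L = 1"
    proof -
      have "degree (coeff S L) \<le> 0" "coeff (coeff S L) 0 = 1" using IH[of 0] by auto
      then show ?thesis by (metis degree_eq_zeroE le_zero_eq coeff_pCons_0 one_pCons)
    qed
    ultimately have "coeff (Rp (g # xs)) (Suc L) = 1" using cf[of "Suc L"] by simp
    then show ?thesis using 0 by (simp add: L_def)
  next
    case (Suc r')
    with Cons.prems have r'L: "r' \<le> L" by (simp add: L_def)
    show ?thesis
    proof (cases "r' = L")
      case True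
      have i0: "length (g # xs) - r = 0" using Suc True by (simp add: L_def)
      have c0: "coeff (Rp (g # xs)) 0 = -g * coeff S 0" using cf[of 0] by simp
      have IHL: "degree (coeff S 0) \<le> L * t" "coeff (coeff S 0) (L * t) = (-1)^L"
        using IH[of L] by auto
      have "degree (-g * coeff S 0) \<le> t + L * t"
        using degree_mult_le[of "-g" "coeff S 0"] dg IHL by linarith
      moreover have "coeff (-g * coeff S 0) (t + L * t) = - ((-1)^L)"
        using coeff_mult_top[OF dg(1) IHL(1)] dg IHL by simp
      ultimately show ?thesis using i0 c0 Suc True by (simp add: L_def)
    next
      case False
      then have r'L': "r' < L" using r'L by simp
      have iS: "length (g # xs) - r = Suc (L - Suc r')" using Suc r'L' by (simp add: L_def)
      have iL: "L - r' = Suc (L - Suc r')" using r'L' by simp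
      have c1: "coeff (Rp (g # xs)) (Suc (L - Suc r')) = -g * coeff S (L - r') + coeff S (L - Suc r')"
        using cf[of "Suc (L - Suc r')"] iL by simp
      have IH1: "degree (coeff S (L - r')) \<le> r' * t" "coeff (coeff S (L - r')) (r' * t) = (-1)^r' * of_nat (L choose r')"
        using IH[of r'] r'L by auto
      have IH2: "degree (coeff S (L - Suc r')) \<le> Suc r' * t" "coeff (coeff S (L - Suc r')) (Suc r' * t) = (-1)^(Suc r') * of_nat (L choose Suc r')"
        using IH[of "Suc r'"] r'L' by auto
      have d1: "degree (-g * coeff S (L - r')) \<le> t + r' * t"
        using degree_mult_le[of "-g" "coeff S (L - r')"] dg IH1 by linarith
      have e1: "coeff (-g * coeff S (L - r')) (t + r' * t) = - ((-1)^r' * of_nat (L choose r'))"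
        using coeff_mult_top[OF dg(1) IH1(1)] dg IH1 by simp
      have "degree (-g * coeff S (L - r') + coeff S (L - Suc r')) \<le> Suc r' * t"
        using d1 IH2 degree_add_le by (metis add.commute mult_Suc)
      moreover have "coeff (-g * coeff S (L - r') + coeff S (L - Suc r')) (Suc r' * t)
          = (-1)^(Suc r') * of_nat (Suc L choose Suc r')"
        using e1 IH2 by (simp add: algebra_simps)
      ultimately show ?thesis using iS c1 Suc by (simp add: L_def)
    qed
  qed
qed

definition IntPP :: "'a::comm_ring_1 poly poly \<Rightarrow> bool" where
  "IntPP R \<longleftrightarrow> (\<forall>j. IntP (coeff R j))"

lemma Rp_IntP: "(\<forall>g\<in>set xs. IntP g) \<Longrightarrow> IntP (coeff (Rp xs) j)"
proof (induction xs arbitrary: j)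
  case Nil then show ?case by (cases j) (auto simp: IntP_def coeff_1)
next
  case (Cons g xs)
  then show ?case
    by (simp only: Rp_Cons coeff_lin_mult) (auto split: nat.split intro!: IntP_add IntP_diff IntP_mult IntP_minus)
qed

lemma Rp_eval:
  "coeff (prod_list (map (\<lambda>g. [:- poly g x, 1:]) xs)) j = poly (coeff (Rp xs) j) x"
proof (induction xs arbitrary: j)
  case Nil then show ?case by (cases j) (auto simp: coeff_1)
next
  case (Cons g xs)
  show ?case
    by (simp only: list.map prod_list.Cons Rp_Cons coeff_lin_mult) (cases j, simp_all add: Cons.IH)
qed

definition Expo :: "nat \<Rightarrow> nat \<Rightarrow> nat" where "Expo k j = (if j < k - 2 then j else j + 2)"
definition fpoly :: "nat \<Rightarrow> (nat \<Rightarrow> 'a::comm_ring_1) \<Rightarrow> 'a poly" where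
  "fpoly k c = (\<Sum>j<k. monom (c j) (Expo k j))"

lemma Expo_inj: "Expo k i = Expo k j \<longleftrightarrow> i = j"
  by (auto simp: Expo_def split: if_splits)

lemma coeff_fpoly: "coeff (fpoly k c) e = (\<Sum>j<k. if Expo k j = e then c j else 0)"
  by (simp add: fpoly_def coeff_sum coeff_monom)

lemma coeff_fpoly_E: "j < k \<Longrightarrow> coeff (fpoly k c) (Expo k j) = c j"
  by (simp add: coeff_fpoly Expo_inj)

lemma coeff_fpoly_gap: "k \<ge> 2 \<Longrightarrow> e = k - 1 \<or> e = k - 2 \<Longrightarrow> coeff (fpoly k c) e = 0"
  unfolding coeff_fpoly by (intro sum.neutral) (auto simp: Expo_def)

lemma degree_fpoly: "degree (fpoly k c) \<le> k + 1"
proof -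
  have "coeff (fpoly k c) e = 0" if "e > k + 1" for e
    unfolding coeff_fpoly using that by (intro sum.neutral) (auto simp: Expo_def)
  then show ?thesis by (meson degree_le not_le_imp_less)
qed

lemma poly_fpoly: "poly (fpoly k c) x = (\<Sum>j<k. c j * x ^ Expo k j)"
  by (simp add: fpoly_def poly_sum poly_monom)

lemma monom_diff': "monom (a - b) n = monom a n - (monom b n :: 'a::comm_ring_1 poly)"
  by (rule poly_eqI) (simp add: coeff_monom)

lemma fpoly_diff: "fpoly k (\<lambda>j. c j - d j) = fpoly k c - fpoly k d"
  by (simp add: fpoly_def sum_subtractf monom_diff')

lemma prod_roots_dvd:
  fixes f :: "'a::idom poly"
  shows "distinct vs \<Longrightarrow> (\<forall>v\<in>set vs. poly f v = 0) \<Longrightarrow> prod_list (map (\<lambda>v. [:-v, 1:]) vs) dvd f"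
proof (induction vs arbitrary: f)
  case Nil then show ?case by simp
next
  case (Cons v vs)
  have "[:-v, 1:] dvd f" using Cons.prems by (simp add: poly_eq_0_iff_dvd)
  then obtain h where h: "f = [:-v, 1:] * h" by (auto simp: dvd_def)
  have "\<forall>u\<in>set vs. poly h u = 0"
  proof
    fix u assume u: "u \<in> set vs"
    then have "u \<noteq> v" using Cons.prems by auto
    moreover have "poly f u = 0" using u Cons.prems by auto
    ultimately show "poly h u = 0" using h by simp
  qed
  then have "prod_list (map (\<lambda>v. [:-v, 1:]) vs) dvd h" using Cons by auto
  then have "[:-v, 1:] * prod_list (map (\<lambda>v. [:-v, 1:]) vs) dvd [:-v, 1:] * h"
    by (rule mult_dvd_mono[OF dvd_refl])
  then show ?case by (simp only: list.map prod_list.Cons h)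
qed

lemma prod_roots_degree:
  fixes vs :: "'a::idom list"
  shows "degree (prod_list (map (\<lambda>v. [:-v, 1:]) vs)) = length vs \<and> prod_list (map (\<lambda>v. [:-v, 1:]) vs) \<noteq> 0"
proof (induction vs)
  case Nil then show ?case by simp
next
  case (Cons v vs)
  then show ?case by (simp del: mult_pCons_left add: degree_mult_eq)
qed

lemma mult_lin_right:
  fixes P :: "'a::comm_ring_1 poly"
  shows "coeff (P * [:b, a:]) (Suc j) = b * coeff P (Suc j) + a * coeff P j"
proof -
  have "P * [:b, a:] = smult b P + pCons 0 (smult a P)"
    by (simp add: mult.commute[of P] mult_pCons_left)
  then show ?thesis by simp
qed

locale thm_setup =
  fixes p m n k t :: nat and \<gamma> :: "'a::{finite,field}" and g :: "nat \<Rightarrow> 'a poly"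
  assumes prime: "prime p" and char: "CHAR('a) = p" and card: "CARD('a) = p ^ m"
    and gen: "generates_over_prime_field \<gamma>" and tdef: "t = (m - 1) div 4"
    and k5: "5 \<le> k" and kn: "2 * k \<le> n - 2" and np: "n \<le> p ^ t"
    and gprop: "\<forall>i<n. Fp_poly (g i) \<and> lead_coeff (g i) = 1 \<and> degree (g i) = t"
    and ginj: "inj_on g {..<n}"
    and nd: "\<not> p dvd (k^2 * (k^2 - 1) div 12)"
begin

definition \<alpha> :: "nat \<Rightarrow> 'a" where "\<alpha> i = poly (g i) \<gamma>"

lemma n_big: "n \<ge> 2 * k + 2" using kn k5 by linarith

lemma p1: "p > 1" using prime prime_gt_1_nat by blast

lemma m_pos: "m \<ge> 1"
proof (rule ccontr)
  assume "\<not> m \<ge> 1"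
  then have "CARD('a) = 1" using card by simp
  moreover have "(0::'a) \<noteq> 1" by simp
  then have "card {0::'a, 1} \<le> CARD('a)" by (intro card_mono) auto
  ultimately show False by simp
qed

lemma t4m: "4 * t < m" using m_pos tdef by linarith

lemma t_pos: "t > 0"
proof (rule ccontr)
  assume "\<not> t > 0"
  then have "n \<le> 1" using np by simp
  then show False using n_big by linarith
qed

lemma g_props: "i < n \<Longrightarrow> IntP (g i) \<and> degree (g i) \<le> t \<and> coeff (g i) t = 1"
  using gprop Fp_IntP by auto

lemma \<alpha>_inj: "inj_on \<alpha> {..<n}"
proof (rule inj_onI, rule ccontr)
  fix i j assume i: "i \<in> {..<n}" and j: "j \<in> {..<n}" and e: "\<alpha> i = \<alpha> j" and ne: "i \<noteq> j"
  define D where "D = g i - g j"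
  have "D \<noteq> 0" using ginj i j ne by (auto simp: D_def inj_on_def)
  moreover have "IntP D" using g_props i j by (auto simp: D_def intro: IntP_diff)
  moreover have "degree D < m"
  proof -
    have "degree D \<le> t" using g_props i j D_def by (metis degree_diff_le lessThan_iff)
    moreover have "coeff D t = 0" using g_props i j D_def by auto
    ultimately have "degree D < t" using t_pos by (rule degree_lt_of_coeff0)
    then show ?thesis using t4m by linarith
  qed
  ultimately have "poly D \<gamma> \<noteq> 0" using lemma_G[OF prime char card gen] by blast
  then show False using e by (simp add: D_def \<alpha>_def)
qed

lemma Q_nonzero:
  assumes ys: "set ys \<subseteq> {..<n}" "length ys = k"
  defines "R \<equiv> Rp (map g ys)"
  shows "poly ((coeff R (k-2))^2 - coeff R (k-1) * coeff R (k-3)) \<gamma> \<noteq> 0"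
proof -
  define xs where "xs = map g ys"
  have lx: "length xs = k" using ys by (simp add: xs_def)
  have hx: "\<forall>h\<in>set xs. degree h \<le> t \<and> coeff h t = 1" using ys g_props by (auto simp: xs_def)
  have Ix: "\<forall>h\<in>set xs. IntP h" using ys g_props by (auto simp: xs_def)
  have RC: "r \<le> k \<Longrightarrow> degree (coeff R (k - r)) \<le> r * t \<and>
           coeff (coeff R (k - r)) (r * t) = (-1)^r * of_nat (k choose r)" for r
    using Rp_coeffs[OF hx, of r] lx by (simp add: R_def xs_def)
  define Q1 where "Q1 = coeff R (k-1)"
  define Q2 where "Q2 = coeff R (k-2)"
  define Q3 where "Q3 = coeff R (k-3)"
  have d1: "degree Q1 \<le> t" "coeff Q1 t = - of_nat k" using RC[of 1] k5 by (auto simp: Q1_def)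
  have d2: "degree Q2 \<le> 2 * t" "coeff Q2 (2 * t) = of_nat (k choose 2)" using RC[of 2] k5 by (auto simp: Q2_def)
  have d3: "degree Q3 \<le> 3 * t" "coeff Q3 (3 * t) = - of_nat (k choose 3)" using RC[of 3] k5 by (auto simp: Q3_def)
  define Q where "Q = Q2^2 - Q1 * Q3"
  have dQ: "degree Q \<le> 4 * t"
  proof -
    have "degree (Q2 * Q2) \<le> 4 * t" using degree_mult_le[of Q2 Q2] d2 by linarith
    moreover have "degree (Q1 * Q3) \<le> 4 * t" using degree_mult_le[of Q1 Q3] d1 d3 by linarith
    ultimately show ?thesis unfolding Q_def power2_eq_square by (meson degree_diff_le)
  qed
  have e1: "coeff (Q2 * Q2) (4 * t) = of_nat (k choose 2) * of_nat (k choose 2)"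
  proof -
    have "coeff (Q2 * Q2) (2 * t + 2 * t) = of_nat (k choose 2) * of_nat (k choose 2)"
      using coeff_mult_top[OF d2(1) d2(1)] d2 by simp
    moreover have "2 * t + 2 * t = 4 * t" by simp
    ultimately show ?thesis by metis
  qed
  have e2: "coeff (Q1 * Q3) (4 * t) = of_nat k * of_nat (k choose 3)"
  proof -
    have "coeff (Q1 * Q3) (t + 3 * t) = of_nat k * of_nat (k choose 3)"
      using coeff_mult_top[OF d1(1) d3(1)] d1 d3 by simp
    moreover have "t + 3 * t = 4 * t" by simp
    ultimately show ?thesis by metis
  qed
  have "coeff Q (4 * t) = of_nat ((k choose 2)^2) - of_nat (k * (k choose 3))"
    unfolding Q_def power2_eq_square coeff_diff e1 e2 by simp
  also have "\<dots> = of_nat (k^2 * (k^2 - 1) div 12)"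
    using key_ident[of k] k5 by simp
  finally have cQ: "coeff Q (4 * t) = of_nat (k^2 * (k^2 - 1) div 12)" .
  have "coeff Q (4 * t) \<noteq> 0" unfolding cQ using nd char by (simp add: of_nat_eq_0_iff_char_dvd)
  then have "Q \<noteq> 0" by auto
  moreover have "IntP Q" unfolding Q_def Q1_def Q2_def Q3_def R_def
    using Rp_IntP[OF Ix] by (auto simp: xs_def intro!: IntP_diff IntP_mult IntP_power)
  moreover have "degree Q < m" using dQ t4m by linarith
  ultimately have "poly Q \<gamma> \<noteq> 0" using lemma_G[OF prime char card gen] by blast
  then show ?thesis by (simp add: Q_def Q1_def Q2_def Q3_def)
qed

end

context thm_setup
begin

lemma core:
  assumes ys: "set ys \<subseteq> {..<n}" "length ys = k" "distinct ys"
    and roots: "\<forall>i\<in>set ys. poly (fpoly k c) (\<alpha> i) = 0"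
  shows "fpoly k c = 0"
proof (rule ccontr)
  assume f0: "fpoly k c \<noteq> 0"
  define f where "f = fpoly k c"
  define vs where "vs = map \<alpha> ys"
  define P where "P = prod_list (map (\<lambda>v. [:-v, 1:]) vs)"
  define R where "R = Rp (map g ys)"
  have dvs: "distinct vs" unfolding vs_def using ys \<alpha>_inj
    by (simp add: distinct_map inj_on_subset)
  have "P dvd f" unfolding P_def f_def using prod_roots_dvd[OF dvs] roots by (auto simp: vs_def)
  then obtain h where h: "f = P * h" by (auto simp: dvd_def)
  have Pdeg: "degree P = k" "P \<noteq> 0" using prod_roots_degree[of vs] ys by (auto simp: P_def vs_def)
  have h0: "h \<noteq> 0" using f0 h f_def by auto
  have "degree f = k + degree h" using h Pdeg h0 by (simp add: degree_mult_eq)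
  moreover have "degree f \<le> k + 1" unfolding f_def by (rule degree_fpoly)
  ultimately have dh: "degree h \<le> 1" by simp
  define b where "b = coeff h 0"
  define a where "a = coeff h 1"
  have hba: "h = [:b, a:]"
  proof (rule poly_eqI)
    fix i show "coeff h i = coeff [:b, a:] i"
    proof (cases i)
      case 0 then show ?thesis by (simp add: b_def)
    next
      case (Suc i') then show ?thesis using dh by (cases i') (auto simp: a_def coeff_eq_0)
    qed
  qed
  have cP: "coeff P j = poly (coeff R j) \<gamma>" for j
    unfolding P_def R_def vs_def using Rp_eval[of \<gamma> "map g ys" j] by (simp add: \<alpha>_def comp_def)
  define c1 where "c1 = coeff P (k-1)"
  define c2 where "c2 = coeff P (k-2)"
  define c3 where "c3 = coeff P (k-3)"
  have s1: "Suc (k-2) = k-1" and s2: "Suc (k-3) = k-2" using k5 by auto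
  have e1: "b * c1 + a * c2 = 0"
  proof -
    have "coeff f (k-1) = 0" unfolding f_def using k5 by (intro coeff_fpoly_gap) auto
    then have "coeff (P * [:b, a:]) (Suc (k-2)) = 0" unfolding s1 h hba .
    then have "b * coeff P (Suc (k-2)) + a * coeff P (k-2) = 0" by (simp only: mult_lin_right)
    then show ?thesis unfolding c1_def c2_def s1 .
  qed
  have e2: "b * c2 + a * c3 = 0"
  proof -
    have "coeff f (k-2) = 0" unfolding f_def using k5 by (intro coeff_fpoly_gap) auto
    then have "coeff (P * [:b, a:]) (Suc (k-3)) = 0" unfolding s2 h hba .
    then have "b * coeff P (Suc (k-3)) + a * coeff P (k-3) = 0" by (simp only: mult_lin_right)
    then show ?thesis unfolding c2_def c3_def s2 .
  qed
  have D: "c2^2 - c1 * c3 \<noteq> 0"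
    using Q_nonzero[OF ys(1) ys(2)] unfolding c1_def c2_def c3_def cP R_def by simp
  have "a * (c2^2 - c1 * c3) = c2 * (b * c1 + a * c2) - c1 * (b * c2 + a * c3)"
    by (simp add: algebra_simps power2_eq_square)
  then have "a = 0" using e1 e2 D by simp
  have "b * (c2^2 - c1 * c3) = c2 * (b * c2 + a * c3) - c3 * (b * c1 + a * c2)"
    by (simp add: algebra_simps power2_eq_square)
  then have "b = 0" using e1 e2 D by simp
  then have "h = 0" using hba \<open>a = 0\<close> by simp
  then show False using h0 by simp
qed

lemma root_count:
  assumes "j0 < k" "c j0 \<noteq> 0"
  shows "card {i. i < n \<and> poly (fpoly k c) (\<alpha> i) = 0} \<le> k - 1"
proof (rule ccontr)
  define Z where "Z = {i. i < n \<and> poly (fpoly k c) (\<alpha> i) = 0}"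
  assume "\<not> card {i. i < n \<and> poly (fpoly k c) (\<alpha> i) = 0} \<le> k - 1"
  then have "k \<le> card Z" unfolding Z_def by simp
  then obtain T where T: "T \<subseteq> Z" "card T = k" "finite T" by (rule obtain_subset_with_card_n)
  define ys where "ys = sorted_list_of_set T"
  have ys: "set ys \<subseteq> {..<n}" "length ys = k" "distinct ys"
    using T by (auto simp: ys_def Z_def)
  have "\<forall>i\<in>set ys. poly (fpoly k c) (\<alpha> i) = 0" using T by (auto simp: ys_def Z_def)
  then have "fpoly k c = 0" using core[OF ys] by blast
  then have "coeff (fpoly k c) (Expo k j0) = 0" by simp
  then show False using coeff_fpoly_E[OF assms(1), of c] assms(2) by simp
qed

lemma all_zero:
  assumes "\<forall>i<n. poly (fpoly k c) (\<alpha> i) = 0" "j < k"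
  shows "c j = 0"
proof (rule ccontr)
  assume "c j \<noteq> 0"
  then have "card {i. i < n \<and> poly (fpoly k c) (\<alpha> i) = 0} \<le> k - 1" using root_count assms(2) by blast
  moreover have "{i. i < n \<and> poly (fpoly k c) (\<alpha> i) = 0} = {..<n}" using assms(1) by auto
  ultimately show False using n_big by simp
qed

end

interpretation cs: vector_space "cscale :: 'a::field \<Rightarrow> (nat \<Rightarrow> 'a) \<Rightarrow> nat \<Rightarrow> 'a"
  by unfold_locales (auto simp: cscale_def fun_eq_iff algebra_simps)

lemma fun_sum_apply: "(\<Sum>x\<in>A. f x) i = (\<Sum>x\<in>A. f x i)"
  by (induction A rule: infinite_finite_induct) auto

lemma card_field_ge2: "CARD('a::{finite,field}) \<ge> 2"
proof -
  have "(0::'a) \<noteq> 1" by simp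
  then have "card {0::'a, 1} \<le> CARD('a)" by (intro card_mono) auto
  then show ?thesis by simp
qed

context thm_setup
begin

definition cw :: "(nat \<Rightarrow> 'a) \<Rightarrow> nat \<Rightarrow> 'a" where
  "cw c = (\<lambda>i. if i < n then (\<Sum>j<k. c j * \<alpha> i ^ Expo k j) else 0)"

definition Cd :: "(nat \<Rightarrow> 'a) set" where
  "Cd = gen_code n k (\<lambda>j i. \<alpha> i ^ Expo k j)"

lemma Cd_eq: "Cd = range cw"
  by (auto simp: Cd_def gen_code_def cw_def)

lemma cw_poly: "cw c i = (if i < n then poly (fpoly k c) (\<alpha> i) else 0)"
  by (simp add: cw_def poly_fpoly)

lemma cw_cong: "(\<And>j. j < k \<Longrightarrow> c j = d j) \<Longrightarrow> cw c = cw d"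
  unfolding cw_def by (intro ext) auto

lemma cw_inj: assumes "cw c = cw d" "j < k" shows "c j = d j"
proof -
  have "\<forall>i<n. poly (fpoly k (\<lambda>j. c j - d j)) (\<alpha> i) = 0"
  proof (intro allI impI)
    fix i assume "i < n"
    then have "cw c i = cw d i" using assms by simp
    then show "poly (fpoly k (\<lambda>j. c j - d j)) (\<alpha> i) = 0" using \<open>i < n\<close> by (simp add: cw_poly fpoly_diff)
  qed
  then have "c j - d j = 0" using all_zero[of "\<lambda>j. c j - d j"] assms(2) by blast
  then show ?thesis by simp
qed

lemma linear_Cd: "is_linear_code n Cd"
proof -
  have "cw c + cw d = cw (\<lambda>j. c j + d j)" for c d
    by (auto simp: cw_def fun_eq_iff sum.distrib algebra_simps)
  moreover have "cscale a (cw c) = cw (\<lambda>j. a * c j)" for a c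
    by (auto simp: cw_def cscale_def fun_eq_iff sum_distrib_left algebra_simps)
  moreover have "0 = cw (\<lambda>_. 0)" by (auto simp: cw_def fun_eq_iff)
  ultimately show ?thesis unfolding is_linear_code_def Cd_eq by (auto simp: cw_def)
qed

definition rw :: "nat \<Rightarrow> nat \<Rightarrow> 'a" where "rw j = cw (\<lambda>j'. if j' = j then 1 else 0)"

lemma rw_inj: "inj_on rw {..<k}"
proof (rule inj_onI)
  fix j1 j2 assume "j1 \<in> {..<k}" "j2 \<in> {..<k}" "rw j1 = rw j2"
  then have "(\<lambda>j'. if j' = j1 then 1 else (0::'a)) j1 = (\<lambda>j'. if j' = j2 then 1 else 0) j1"
    using cw_inj unfolding rw_def by blast
  then show "j1 = j2" by (auto split: if_splits)
qed

lemma rw_eq: assumes "j < k" shows "rw j = (\<lambda>i. if i < n then \<alpha> i ^ Expo k j else 0)"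
proof -
  have "(\<Sum>j'<k. (if j' = j then 1 else 0) * f j') = f j" for f :: "nat \<Rightarrow> 'a"
  proof -
    have "\<And>j'. (if j' = j then 1 else 0) * f j' = (if j' = j then f j' else 0)" by simp
    then have "(\<Sum>j'<k. (if j' = j then 1 else 0) * f j') = (\<Sum>j'<k. if j' = j then f j' else 0)" by simp
    also have "\<dots> = f j" using assms by (simp add: sum.delta)
    finally show ?thesis .
  qed
  then show ?thesis unfolding rw_def cw_def by auto
qed

lemma sum_rw: "(\<Sum>j<k. cscale (c j) (rw j)) = cw c"
proof
  fix i
  have "(\<Sum>j<k. cscale (c j) (rw j)) i = (\<Sum>j<k. c j * rw j i)"
    by (simp add: fun_sum_apply cscale_def)
  also have "\<dots> = (\<Sum>j<k. c j * (if i < n then \<alpha> i ^ Expo k j else 0))"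
    by (intro sum.cong) (auto simp: rw_eq)
  also have "\<dots> = cw c i" by (cases "i < n") (auto simp: cw_def)
  finally show "(\<Sum>j<k. cscale (c j) (rw j)) i = cw c i" .
qed

lemma dim_Cd: "code_dim Cd = k"
proof -
  define B where "B = rw ` {..<k}"
  have cardB: "card B = k" unfolding B_def using rw_inj by (simp add: card_image)
  have BC: "B \<subseteq> Cd" unfolding B_def Cd_eq rw_def by auto
  have CB: "Cd \<subseteq> cs.span B"
  proof
    fix x assume "x \<in> Cd"
    then obtain c where x: "x = cw c" unfolding Cd_eq by auto
    have "(\<Sum>j<k. cscale (c j) (rw j)) \<in> cs.span B"
      unfolding B_def by (intro cs.span_sum cs.span_scale cs.span_base) auto
    then show "x \<in> cs.span B" using x sum_rw by simp
  qed
  have indep: "cs.independent B"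
  proof
    assume "cs.dependent B"
    then obtain u where u: "\<exists>v\<in>B. u v \<noteq> 0" "(\<Sum>v\<in>B. cscale (u v) v) = 0"
      using cs.dependent_finite[of B] unfolding B_def by auto
    have "(\<Sum>v\<in>B. cscale (u v) v) = (\<Sum>j<k. cscale (u (rw j)) (rw j))"
      unfolding B_def using rw_inj by (simp add: sum.reindex)
    also have "\<dots> = cw (\<lambda>j. u (rw j))" by (rule sum_rw)
    finally have "cw (\<lambda>j. u (rw j)) = cw (\<lambda>_. 0)" using u(2) by (auto simp: cw_def fun_eq_iff)
    then have "\<forall>j<k. u (rw j) = 0" using cw_inj by blast
    then show False using u(1) unfolding B_def by auto
  qed
  show ?thesis unfolding code_dim_def by (rule cs.dim_unique[OF BC CB indep cardB])
qed

end

context thm_setup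
begin

lemma Cd_PiE: "Cd = cw ` (PiE {..<k} (\<lambda>_. UNIV))"
proof
  show "Cd \<subseteq> cw ` (PiE {..<k} (\<lambda>_. UNIV))"
  proof
    fix x assume "x \<in> Cd"
    then obtain c where x: "x = cw c" unfolding Cd_eq by auto
    have "cw c = cw (restrict c {..<k})" by (rule cw_cong) auto
    then show "x \<in> cw ` (PiE {..<k} (\<lambda>_. UNIV))" using x by auto
  qed
qed (auto simp: Cd_eq)

lemma card_Cd: "card Cd = CARD('a) ^ k"
proof -
  have "inj_on cw (PiE {..<k} (\<lambda>_. UNIV))"
  proof (rule inj_onI)
    fix c d assume c: "c \<in> PiE {..<k} (\<lambda>_. (UNIV :: 'a set))" and d: "d \<in> PiE {..<k} (\<lambda>_. (UNIV :: 'a set))"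
      and e: "cw c = cw d"
    show "c = d"
    proof (rule PiE_ext[OF c d])
      fix j assume "j \<in> {..<k}" then show "c j = d j" using cw_inj[OF e] by simp
    qed
  qed
  then have "card Cd = card (PiE {..<k} (\<lambda>_. (UNIV :: 'a set)))" unfolding Cd_PiE by (rule card_image)
  also have "\<dots> = CARD('a) ^ k" by (simp add: card_PiE)
  finally show ?thesis .
qed

lemma finite_Cd: "finite Cd"
  unfolding Cd_PiE by (intro finite_imageI finite_PiE) auto

lemma hdist_le: "hdist n x y \<le> n"
proof -
  have "card {i. i < n \<and> x i \<noteq> y i} \<le> card {..<n}" by (intro card_mono) auto
  then show ?thesis by (simp add: hdist_def)
qed

lemma hdist_lower:
  assumes "x \<in> Cd" "y \<in> Cd" "x \<noteq> y"
  shows "n - k + 1 \<le> hdist n x y"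
proof -
  obtain c d where x: "x = cw c" and y: "y = cw d" using assms unfolding Cd_eq by auto
  obtain j where j: "j < k" "c j \<noteq> d j" using assms(3) x y cw_cong by blast
  define e where "e = (\<lambda>j. c j - d j)"
  define Z where "Z = {i. i < n \<and> poly (fpoly k e) (\<alpha> i) = 0}"
  have cZ: "card Z \<le> k - 1" unfolding Z_def using root_count[of j e] j by (simp add: e_def)
  have "{i. i < n \<and> x i \<noteq> y i} = {..<n} - Z"
    by (auto simp: Z_def x y cw_poly e_def fpoly_diff)
  moreover have "card ({..<n} - Z) = n - card Z"
    by (subst card_Diff_subset) (auto simp: Z_def)
  ultimately have "hdist n x y = n - card Z" by (simp add: hdist_def)
  then show ?thesis using cZ k5 n_big by linarith
qed

lemma hdist_upper: "\<exists>x y. x \<in> Cd \<and> y \<in> Cd \<and> x \<noteq> y \<and> hdist n x y \<le> n - k + 1"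
proof -
  define pr where "pr = (\<lambda>x :: nat \<Rightarrow> 'a. restrict x {..<k-1})"
  have "pr ` Cd \<subseteq> PiE {..<k-1} (\<lambda>_. UNIV)" unfolding pr_def by (intro image_subsetI restrict_PiE) auto
  then have "card (pr ` Cd) \<le> card (PiE {..<k-1} (\<lambda>_. (UNIV :: 'a set)))"
    by (intro card_mono) (auto intro!: finite_PiE)
  also have "\<dots> = CARD('a) ^ (k - 1)" by (simp add: card_PiE)
  also have "\<dots> < CARD('a) ^ k" using card_field_ge2[where 'a='a] k5 by (intro power_strict_increasing) auto
  finally have "card (pr ` Cd) < card Cd" using card_Cd by simp
  then have "\<not> inj_on pr Cd" using card_image by fastforce
  then obtain x y where xy: "x \<in> Cd" "y \<in> Cd" "x \<noteq> y" "pr x = pr y" by (auto simp: inj_on_def)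
  have "{i. i < n \<and> x i \<noteq> y i} \<subseteq> {k-1..<n}"
  proof
    fix i assume i: "i \<in> {i. i < n \<and> x i \<noteq> y i}"
    have "\<not> i < k - 1"
    proof
      assume "i < k - 1"
      then have "pr x i = x i" "pr y i = y i" by (auto simp: pr_def)
      then show False using xy(4) i by simp
    qed
    then show "i \<in> {k-1..<n}" using i by auto
  qed
  then have "hdist n x y \<le> card {k-1..<n}" unfolding hdist_def by (intro card_mono) auto
  also have "\<dots> = n - k + 1" using k5 n_big by simp
  finally show ?thesis using xy by blast
qed

lemma min_dist_Cd: "min_dist n Cd = n - k + 1"
proof -
  define HD where "HD = {hdist n x y | x y. x \<in> Cd \<and> y \<in> Cd \<and> x \<noteq> y}"
  have fin: "finite HD" by (rule finite_subset[of _ "{..n}"]) (auto simp: HD_def hdist_le)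
  obtain x y where xy: "x \<in> Cd" "y \<in> Cd" "x \<noteq> y" "hdist n x y \<le> n - k + 1" using hdist_upper by blast
  then have "hdist n x y = n - k + 1" using hdist_lower by (meson antisym)
  then have mem: "n - k + 1 \<in> HD" unfolding HD_def using xy by (metis (mono_tags, lifting) mem_Collect_eq)
  have "Min HD = n - k + 1"
    by (rule Min_eqI[OF fin _ mem]) (use hdist_lower in \<open>auto simp: HD_def\<close>)
  then show ?thesis by (simp add: min_dist_def HD_def)
qed

lemma MDS_Cd: "is_MDS n k Cd"
  unfolding is_MDS_def using linear_Cd dim_Cd min_dist_Cd by simp

end

definition Pd :: "nat \<Rightarrow> 'a::zero poly set" where "Pd d = {f. degree f < d}"

lemma coeff_monsum: "coeff (\<Sum>i<d. monom (c i) i) e = (if e < d then c e else 0)"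
  by (simp add: coeff_sum coeff_monom)

lemma card_Pd:
  assumes "d > 0"
  shows "finite (Pd d :: 'a::{finite,comm_ring_1} poly set) \<and> card (Pd d :: 'a poly set) = CARD('a) ^ d"
proof -
  define F where "F = (\<lambda>c. \<Sum>i<d. monom (c i) i :: 'a poly)"
  have eq: "Pd d = F ` (PiE {..<d} (\<lambda>_. UNIV))"
  proof
    show "Pd d \<subseteq> F ` (PiE {..<d} (\<lambda>_. UNIV))"
    proof
      fix f :: "'a poly" assume "f \<in> Pd d"
      then have dg: "degree f < d" by (simp add: Pd_def)
      have "f = F (restrict (coeff f) {..<d})"
      proof (rule poly_eqI)
        fix e show "coeff f e = coeff (F (restrict (coeff f) {..<d})) e"
          using dg by (auto simp: F_def coeff_monsum coeff_eq_0)
      qed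
      then show "f \<in> F ` (PiE {..<d} (\<lambda>_. UNIV))" by auto
    qed
  next
    show "F ` (PiE {..<d} (\<lambda>_. UNIV)) \<subseteq> Pd d"
    proof
      fix f assume "f \<in> F ` (PiE {..<d} (\<lambda>_. UNIV))"
      then obtain c where f: "f = F c" by auto
      have "\<forall>e>d - 1. coeff f e = 0" using assms by (auto simp: f F_def coeff_monsum)
      then have "degree f \<le> d - 1" by (simp add: degree_le)
      then show "f \<in> Pd d" using assms by (simp add: Pd_def)
    qed
  qed
  have inj: "inj_on F (PiE {..<d} (\<lambda>_. UNIV))"
  proof (rule inj_onI)
    fix c c' assume c: "c \<in> PiE {..<d} (\<lambda>_. (UNIV :: 'a set))" and c': "c' \<in> PiE {..<d} (\<lambda>_. (UNIV :: 'a set))"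
      and e: "F c = F c'"
    show "c = c'"
    proof (rule PiE_ext[OF c c'])
      fix j assume "j \<in> {..<d}"
      then show "c j = c' j" using arg_cong[OF e, of "\<lambda>f. coeff f j"] by (simp add: F_def coeff_monsum)
    qed
  qed
  show ?thesis unfolding eq using inj
    by (simp add: card_image card_PiE finite_PiE)
qed

lemma roots_bound_inj:
  fixes F :: "'a::idom poly"
  assumes "F \<noteq> 0" "inj_on \<beta> {..<n}" "\<forall>i<n. poly F (\<beta> i) = 0"
  shows "n \<le> degree F"
proof -
  have "\<beta> ` {..<n} \<subseteq> {x. poly F x = 0}" using assms(3) by auto
  then have "card (\<beta> ` {..<n}) \<le> card {x. poly F x = 0}"
    by (intro card_mono poly_roots_finite assms(1))
  also have "\<dots> \<le> degree F" by (rule card_poly_roots_bound[OF assms(1)])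
  finally show ?thesis using assms(2) by (simp add: card_image)
qed

lemma shift_coeff:
  fixes A B :: "'a::comm_ring_1 poly"
  assumes "degree A < 2 * k - 1" "k > 0"
  shows "coeff (A + monom 1 (2 * k) * B) e = (if e < 2 * k then coeff A e else coeff B (e - 2 * k))"
  using assms by (auto simp: coeff_monom_mult coeff_eq_0)

lemma expo_decomp:
  assumes "k \<ge> 5" "e \<le> 2 * k - 2 \<or> e = 2 * k \<or> e = 2 * k + 1"
  shows "\<exists>j1<k. \<exists>j2<k. Expo k j1 + Expo k j2 = e"
proof -
  have E1: "j < k - 2 \<Longrightarrow> Expo k j = j" for j by (simp add: Expo_def)
  have E2: "j \<ge> k - 2 \<Longrightarrow> Expo k j = j + 2" for j by (simp add: Expo_def)
  consider "e \<le> k - 3" | "e = k - 2 \<or> e = k - 1" | "k \<le> e \<and> e \<le> 2 * k - 3" | "e = 2 * k - 2" | "e = 2 * k" | "e = 2 * k + 1"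
    using assms by linarith
  then show ?thesis
  proof cases
    case 1 then show ?thesis using assms E1[of 0] E1[of e] by (intro exI[of _ 0] conjI exI[of _ e]) auto
  next
    case 2 then show ?thesis using assms E1[of "k-3"] E1[of "e - (k-3)"]
      by (intro exI[of _ "k-3"] conjI exI[of _ "e - (k-3)"]) auto
  next
    case 3 then show ?thesis using assms E2[of "k-2"] E1[of "e - k"]
      by (intro exI[of _ "k-2"] conjI exI[of _ "e - k"]) auto
  next
    case 4 then show ?thesis using assms E2[of "k-1"] E1[of "k-3"]
      by (intro exI[of _ "k-1"] conjI exI[of _ "k-3"]) auto
  next
    case 5 then show ?thesis using assms E2[of "k-2"]
      by (intro exI[of _ "k-2"] conjI exI[of _ "k-2"]) auto
  next
    case 6 then show ?thesis using assms E2[of "k-2"] E2[of "k-1"]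
      by (intro exI[of _ "k-2"] conjI exI[of _ "k-1"]) auto
  qed
qed

context thm_setup
begin

lemma nonGRS_Cd: "non_GRS n Cd"
  unfolding non_GRS_def
proof
  assume "\<exists>k' a w. is_GRS_params n a w \<and> code_equiv n Cd (GRS n k' a w)"
  then obtain k' a w where par: "is_GRS_params n a w" and eqv: "code_equiv n Cd (GRS n k' a w)" by blast
  obtain \<sigma> cc where \<sigma>: "\<sigma> permutes {..<n}" and cc: "\<forall>i<n. cc i \<noteq> 0"
    and GM: "GRS n k' a w = (\<lambda>x. \<lambda>i. if i < n then cc i * x (\<sigma> i) else 0) ` Cd"
    using eqv unfolding code_equiv_def by blast
  define Mp where "Mp = (\<lambda>x :: nat \<Rightarrow> 'a. \<lambda>i. if i < n then cc i * x (\<sigma> i) else 0)"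
  define G where "G = (\<lambda>f. \<lambda>i. if i < n then w i * poly f (a i) else (0::'a))"
  have GRS_eq: "GRS n k' a w = {G f | f. f = 0 \<or> degree f < k'}" by (simp add: GRS_def G_def)
  have ainj: "inj_on a {..<n}" and w0: "\<forall>i<n. w i \<noteq> 0" using par by (auto simp: is_GRS_params_def)
  have \<sigma>n: "i < n \<Longrightarrow> \<sigma> i < n" for i using \<sigma> by (metis lessThan_iff permutes_in_image)
  define q where "q = CARD('a)"
  have q2: "q \<ge> 2" unfolding q_def by (rule card_field_ge2)
  have finGRS: "finite (GRS n k' a w)" unfolding GM using finite_Cd by simp
  have cardGRS: "card (GRS n k' a w) \<le> q ^ k" unfolding GM q_def using card_Cd card_image_le[OF finite_Cd] by metis
  have G_inj: "f1 = f2" if "G f1 = G f2" "degree f1 < n" "degree f2 < n" for f1 f2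
  proof (rule ccontr)
    assume ne: "f1 \<noteq> f2"
    have "\<forall>i<n. poly (f1 - f2) (a i) = 0"
    proof (intro allI impI)
      fix i assume "i < n"
      then have "w i * poly f1 (a i) = w i * poly f2 (a i)" using fun_cong[OF that(1), of i] by (simp add: G_def)
      then show "poly (f1 - f2) (a i) = 0" using w0 \<open>i < n\<close> by simp
    qed
    then have "n \<le> degree (f1 - f2)" using roots_bound_inj[of "f1 - f2" a n] ne ainj by simp
    moreover have "degree (f1 - f2) < n" using that(2,3) degree_diff_le_max[of f1 f2] by linarith
    ultimately show False by simp
  qed
  have k'k: "k' \<le> k"
  proof (rule ccontr)
    assume "\<not> k' \<le> k"
    have sub: "G ` Pd (k+1) \<subseteq> GRS n k' a w" unfolding GRS_eq Pd_def using \<open>\<not> k' \<le> k\<close> by auto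
    have "inj_on G (Pd (k+1))" using G_inj n_big by (auto simp: inj_on_def Pd_def)
    then have "card (G ` Pd (k+1)) = q ^ (k+1)" using card_Pd[of "k+1", where 'a='a] by (simp add: card_image q_def)
    moreover have "card (G ` Pd (k+1)) \<le> card (GRS n k' a w)" by (rule card_mono[OF finGRS sub])
    ultimately have "q ^ (k+1) \<le> q ^ k" using cardGRS by linarith
    moreover have "q ^ k < q ^ (k+1)" using q2 by (intro power_strict_increasing) auto
    ultimately show False by linarith
  qed
  define \<beta> where "\<beta> i = \<alpha> (\<sigma> i)" for i
  have \<beta>inj: "inj_on \<beta> {..<n}"
  proof -
    have "inj_on \<sigma> {..<n}" using \<sigma> by (meson permutes_inj_on)
    moreover have "\<sigma> ` {..<n} \<subseteq> {..<n}" using \<sigma>n by auto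
    then have "\<sigma> ` {..<n} = {..<n}" using permutes_image[OF \<sigma>] by simp
    have "inj_on (\<alpha> \<circ> \<sigma>) {..<n}"
      by (rule comp_inj_on) (use \<open>inj_on \<sigma> {..<n}\<close> \<open>\<sigma> ` {..<n} = {..<n}\<close> \<alpha>_inj in auto)
    then show ?thesis unfolding \<beta>_def comp_def .
  qed
  have hex: "\<forall>j. \<exists>h. j < k \<longrightarrow> degree h < k \<and> (\<forall>i<n. cc i * \<beta> i ^ Expo k j = w i * poly h (a i))"
  proof (intro allI)
    fix j show "\<exists>h. j < k \<longrightarrow> degree h < k \<and> (\<forall>i<n. cc i * \<beta> i ^ Expo k j = w i * poly h (a i))"
    proof (cases "j < k")
      case True
      have "rw j \<in> Cd" unfolding Cd_eq rw_def by auto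
      then have "Mp (rw j) \<in> GRS n k' a w" unfolding GM Mp_def by auto
      then obtain f where f: "f = 0 \<or> degree f < k'" "Mp (rw j) = G f" unfolding GRS_eq by auto
      have "degree f < k" using f(1) k'k k5 by auto
      moreover have "\<forall>i<n. cc i * \<beta> i ^ Expo k j = w i * poly f (a i)"
      proof (intro allI impI)
        fix i assume i: "i < n"
        have "Mp (rw j) i = G f i" using f(2) by simp
        then show "cc i * \<beta> i ^ Expo k j = w i * poly f (a i)"
          using i \<sigma>n[OF i] True by (simp add: Mp_def G_def rw_eq \<beta>_def)
      qed
      ultimately show ?thesis by blast
    qed auto
  qed
  then obtain hh where hh: "\<And>j. j < k \<Longrightarrow> degree (hh j) < k \<and> (\<forall>i<n. cc i * \<beta> i ^ Expo k j = w i * poly (hh j) (a i))"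
    by metis
  define Good where "Good F \<longleftrightarrow> (\<exists>H. degree H < 2 * k - 1 \<and> (\<forall>i<n. (cc i)^2 * poly F (\<beta> i) = (w i)^2 * poly H (a i)))" for F
  have G0: "Good 0" unfolding Good_def using k5 by (intro exI[of _ 0]) auto
  have Gadd: "Good (F1 + F2)" if gg: "Good F1" "Good F2" for F1 F2
  proof -
    obtain H1 H2 where "degree H1 < 2 * k - 1" "\<forall>i<n. (cc i)^2 * poly F1 (\<beta> i) = (w i)^2 * poly H1 (a i)"
      "degree H2 < 2 * k - 1" "\<forall>i<n. (cc i)^2 * poly F2 (\<beta> i) = (w i)^2 * poly H2 (a i)"
      using gg unfolding Good_def by blast
    then show ?thesis unfolding Good_def
      by (intro exI[of _ "H1 + H2"]) (auto simp: algebra_simps intro: le_less_trans[OF degree_add_le_max])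
  qed
  have Gsmult: "Good (smult c F)" if gg: "Good F" for c F
  proof -
    obtain H where "degree H < 2 * k - 1" "\<forall>i<n. (cc i)^2 * poly F (\<beta> i) = (w i)^2 * poly H (a i)"
      using gg unfolding Good_def by blast
    then show ?thesis unfolding Good_def
      by (intro exI[of _ "smult c H"]) (auto simp: algebra_simps)
  qed
  have Gsum: "Good (\<Sum>x\<in>A. f x)" if "finite A" "\<And>x. x \<in> A \<Longrightarrow> Good (f x)" for A and f :: "nat \<Rightarrow> 'a poly"
    using that by (induction A rule: finite_induct) (auto intro: G0 Gadd)
  have Gmon1: "Good (monom 1 (Expo k j1 + Expo k j2))" if jj: "j1 < k" "j2 < k" for j1 j2
  proof -
    obtain H1 H2 where h1: "degree H1 < k" "\<forall>i<n. cc i * \<beta> i ^ Expo k j1 = w i * poly H1 (a i)"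
      and h2: "degree H2 < k" "\<forall>i<n. cc i * \<beta> i ^ Expo k j2 = w i * poly H2 (a i)"
      using hh[OF jj(1)] hh[OF jj(2)] by blast
    have "degree (H1 * H2) < 2 * k - 1" using degree_mult_le[of H1 H2] h1(1) h2(1) by linarith
    moreover have "\<forall>i<n. (cc i)^2 * poly (monom 1 (Expo k j1 + Expo k j2)) (\<beta> i) = (w i)^2 * poly (H1 * H2) (a i)"
    proof (intro allI impI)
      fix i assume i: "i < n"
      have "(cc i)^2 * poly (monom 1 (Expo k j1 + Expo k j2)) (\<beta> i) = (cc i * \<beta> i ^ Expo k j1) * (cc i * \<beta> i ^ Expo k j2)"
        by (simp add: poly_monom power_add power2_eq_square algebra_simps)
      also have "\<dots> = (w i * poly H1 (a i)) * (w i * poly H2 (a i))" using h1 h2 i by simp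
      also have "\<dots> = (w i)^2 * poly (H1 * H2) (a i)" by (simp add: power2_eq_square algebra_simps)
      finally show "(cc i)^2 * poly (monom 1 (Expo k j1 + Expo k j2)) (\<beta> i) = (w i)^2 * poly (H1 * H2) (a i)" .
    qed
    ultimately show ?thesis unfolding Good_def by blast
  qed
  have Gmon: "Good (monom c e)" if ee: "e \<le> 2 * k - 2 \<or> e = 2 * k \<or> e = 2 * k + 1" for c e
  proof -
    obtain j1 j2 where "j1 < k" "j2 < k" "Expo k j1 + Expo k j2 = e" using expo_decomp[OF k5 ee] by blast
    then have "Good (monom 1 e)" using Gmon1 by blast
    then have "Good (smult c (monom 1 e))" by (rule Gsmult)
    then show ?thesis by (simp add: smult_monom)
  qed
  have GA: "Good A" if "degree A < 2 * k - 1" for A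
  proof -
    have "A = (\<Sum>i<2 * k - 1. monom (coeff A i) i)"
      by (rule poly_eqI) (use that in \<open>auto simp: coeff_monsum coeff_eq_0\<close>)
    moreover have "Good (\<Sum>i<2 * k - 1. monom (coeff A i) i)"
      by (intro Gsum Gmon) auto
    ultimately show ?thesis by simp
  qed
  have GB: "Good (monom 1 (2 * k) * B)" if "degree B < 2" for B
  proof -
    have "monom 1 (2 * k) * B = monom (coeff B 0) (2 * k) + monom (coeff B 1) (2 * k + 1)"
    proof (rule poly_eqI)
      fix e
      show "coeff (monom 1 (2 * k) * B) e = coeff (monom (coeff B 0) (2 * k) + monom (coeff B 1) (2 * k + 1)) e"
        using that by (auto simp: coeff_monom_mult coeff_monom coeff_eq_0)
    qed
    moreover have "Good (monom (coeff B 0) (2 * k) + monom (coeff B 1) (2 * k + 1))"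
      by (intro Gadd Gmon) auto
    ultimately show ?thesis by simp
  qed
  define FF where "FF = (\<lambda>(A, B). A + monom 1 (2 * k) * B :: 'a poly)"
  define Psi where "Psi = (\<lambda>AB. SOME H. degree H < 2 * k - 1 \<and> (\<forall>i<n. (cc i)^2 * poly (FF AB) (\<beta> i) = (w i)^2 * poly H (a i)))"
  have Psi: "degree (Psi AB) < 2 * k - 1 \<and> (\<forall>i<n. (cc i)^2 * poly (FF AB) (\<beta> i) = (w i)^2 * poly (Psi AB) (a i))"
    if ABin: "AB \<in> Pd (2 * k - 1) \<times> Pd 2" for AB
  proof -
    obtain A B where AB: "AB = (A, B)" "degree A < 2 * k - 1" "degree B < 2" using ABin by (auto simp: Pd_def)
    have "Good (FF AB)" unfolding AB FF_def using GA GB AB by (auto intro: Gadd)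
    then show ?thesis unfolding Psi_def Good_def by (rule someI_ex)
  qed
  have FFc: "coeff (FF (A, B)) e = (if e < 2 * k then coeff A e else coeff B (e - 2 * k))"
    if "degree A < 2 * k - 1" for A B e
    unfolding FF_def using shift_coeff[OF that, of B e] k5 by simp
  have inj: "inj_on Psi (Pd (2 * k - 1) \<times> Pd 2)"
  proof (rule inj_onI)
    fix AB AB' assume in1: "AB \<in> Pd (2 * k - 1) \<times> Pd 2" and in2: "AB' \<in> Pd (2 * k - 1) \<times> Pd 2" and e: "Psi AB = Psi AB'"
    obtain A B where AB: "AB = (A, B)" "degree A < 2 * k - 1" "degree B < 2" using in1 by (auto simp: Pd_def)
    obtain A' B' where AB': "AB' = (A', B')" "degree A' < 2 * k - 1" "degree B' < 2" using in2 by (auto simp: Pd_def)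
    have "\<forall>i<n. poly (FF AB - FF AB') (\<beta> i) = 0"
    proof (intro allI impI)
      fix i assume i: "i < n"
      have "(cc i)^2 * poly (FF AB) (\<beta> i) = (cc i)^2 * poly (FF AB') (\<beta> i)"
        using Psi[OF in1] Psi[OF in2] e i by simp
      then show "poly (FF AB - FF AB') (\<beta> i) = 0" using cc i by simp
    qed
    moreover have "degree (FF AB - FF AB') < n"
    proof -
      have "coeff (FF AB - FF AB') e = 0" if "e > 2 * k + 1" for e
        using that AB AB' FFc[of A B e] FFc[of A' B' e] by (auto simp: coeff_eq_0)
      then have "degree (FF AB - FF AB') \<le> 2 * k + 1" by (meson degree_le)
      then show ?thesis using n_big by linarith
    qed
    ultimately have "FF AB = FF AB'"
    proof (cases "FF AB - FF AB' = 0")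
      case False
      assume r: "\<forall>i<n. poly (FF AB - FF AB') (\<beta> i) = 0" "degree (FF AB - FF AB') < n"
      have "n \<le> degree (FF AB - FF AB')" by (rule roots_bound_inj[OF False \<beta>inj r(1)])
      then show ?thesis using r(2) by linarith
    qed simp
    then have ce: "coeff (FF (A, B)) e = coeff (FF (A', B')) e" for e using AB AB' by simp
    have "A = A'"
    proof (rule poly_eqI)
      fix e show "coeff A e = coeff A' e"
      proof (cases "e < 2 * k")
        case True then show ?thesis using ce[of e] FFc[of A B e] FFc[of A' B' e] AB AB' by simp
      next
        case False then show ?thesis using AB AB' by (simp add: coeff_eq_0)
      qed
    qed
    moreover have "B = B'"
    proof (rule poly_eqI)
      fix e show "coeff B e = coeff B' e"
        using ce[of "e + 2 * k"] FFc[of A B "e + 2 * k"] FFc[of A' B' "e + 2 * k"] AB AB' by simp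
    qed
    ultimately show "AB = AB'" using AB AB' by simp
  qed
  have sub: "Psi ` (Pd (2 * k - 1) \<times> Pd 2) \<subseteq> Pd (2 * k - 1)" using Psi by (auto simp: Pd_def)
  have fP: "finite (Pd (2 * k - 1) :: 'a poly set)" "card (Pd (2 * k - 1) :: 'a poly set) = q ^ (2 * k - 1)"
    using card_Pd[of "2 * k - 1", where 'a='a] k5 by (auto simp: q_def)
  have fP2: "card (Pd 2 :: 'a poly set) = q ^ 2" using card_Pd[of 2, where 'a='a] by (simp add: q_def)
  have "card ((Pd (2 * k - 1) :: 'a poly set) \<times> (Pd 2 :: 'a poly set)) \<le> card (Pd (2 * k - 1) :: 'a poly set)"
    by (rule card_inj_on_le[OF inj sub fP(1)])
  then have "q ^ (2 * k - 1) * q ^ 2 \<le> q ^ (2 * k - 1)" using fP fP2 by (simp add: card_cartesian_product)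
  moreover have "q ^ (2 * k - 1) > 0" using q2 by simp
  moreover have "q ^ 2 > 1" using q2 by (intro one_less_power) auto
  ultimately have "q ^ (2 * k - 1) * 1 < q ^ (2 * k - 1) * q ^ 2" by (intro mult_strict_left_mono) auto
  then show False using \<open>q ^ (2 * k - 1) * q ^ 2 \<le> q ^ (2 * k - 1)\<close> by simp
qed

end

theorem theorem3p8:
  fixes p m n k t :: nat and \<gamma> :: "'a::{finite,field}"
    and g :: "nat \<Rightarrow> 'a poly"
  assumes "prime p" and "CHAR('a) = p" and "CARD('a) = p ^ m"
    and "generates_over_prime_field \<gamma>"
    and "t = (m - 1) div 4"
    and "5 \<le> k" and "2 * k \<le> n - 2" and "n \<le> p ^ t"
    and "\<forall>i<n. Fp_poly (g i) \<and> lead_coeff (g i) = 1 \<and> degree (g i) = t"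
    and "inj_on g {..<n}"
    and "\<not> p dvd (k^2 * (k^2 - 1) div 12)"
  shows "let \<alpha> = (\<lambda>i. poly (g i) \<gamma>);
             E = (\<lambda>j. if j < k - 2 then j else j + 2);
             C = gen_code n k (\<lambda>j i. \<alpha> i ^ E j)
         in is_MDS n k C \<and> non_GRS n C"
  proof -
  interpret thm_setup p m n k t \<gamma> g
    by (rule thm_setup.intro) (fact assms)+
  have "gen_code n k (\<lambda>j i. poly (g i) \<gamma> ^ (if j < k - 2 then j else j + 2)) = Cd"
    unfolding Cd_def \<alpha>_def Expo_def ..
  then show ?thesis unfolding Let_def using MDS_Cd nonGRS_Cd by simp
qed

end
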